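(* Define $a_0 = 0$ and $a_n = \sum_{k=0}^{n-1} k!\,(n-k-1)!$ for $n \geq 1$. Then for every natural number $n$, $$G_n = \sum_{k=0}^{n} (-1)^{k-1} a_k\, S(n,k).$$
   Context: The Genocchi numbers $G_n$ ($n \in \mathbb{N}$) are defined by the exponential generating function $\frac{2x}{e^x+1} = \sum_{n=0}^{\infty} G_n \frac{x^n}{n!}$. The Stirling numbers of the second kind $S(n,k)$ ($0 \le k \le n$) are the integers defined by the polynomial identity $X^n = \sum_{k=0}^{n} S(n,k)\, X(X-1)\cdots(X-k+1)$. *)

theory Defs
  imports "HOL-Combinatorics.Stirling" "HOL-Computational_Algebra.Formal_Power_Series"
begin

definition genocchi :: "nat \<Rightarrow> rat" where
  "genocchi n = fact n * fps_nth (2 * fps_X / (fps_exp 1 + 1)) n"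

definition a_seq :: "nat \<Rightarrow> nat" where
  "a_seq n = (if n = 0 then 0 else (\<Sum>k<n. fact k * fact (n - k - 1)))"

end

theory Submission
  imports Defs
begin

unbundle fps_syntax

lemma a_rec:
  "2 * a_seq (Suc m) = Suc m * a_seq m + 2 * fact m"
proof -
  have trm: "Suc m * (fact j * fact (m - 1 - j)) = fact (Suc j) * fact (m - Suc j) + fact j * fact (m - j)"
    if "j < m" for j
  proof -
    obtain r where r: "m = j + r + 1" using \<open>j < m\<close> by (metis add.commute add_Suc less_imp_Suc_add plus_1_eq_Suc)
    have "m - 1 - j = r" "m - Suc j = r" "m - j = Suc r" using r by auto
    then show ?thesis using r by (simp add: algebra_simps)
  qed
  have A: "a_seq (Suc m) = (\<Sum>j<Suc m. fact j * fact (m - j))"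
    by (simp add: a_seq_def)
  have B: "Suc m * a_seq m = (\<Sum>j<m. Suc m * (fact j * fact (m - 1 - j)))"
    by (simp add: a_seq_def sum_distrib_left sum.distrib algebra_simps)
  also have "\<dots> = (\<Sum>j<m. fact (Suc j) * fact (m - Suc j)) + (\<Sum>j<m. fact j * fact (m - j))"
    using trm by (simp add: sum.distrib)
  also have "(\<Sum>j<m. fact (Suc j) * fact (m - Suc j)) = (\<Sum>j<Suc m. fact j * fact (m - j)) - (fact m :: nat)"
    unfolding sum.lessThan_Suc_shift by simp
  also have "(\<Sum>j<m. fact j * fact (m - j)) = (\<Sum>j<Suc m. fact j * fact (m - j)) - (fact m :: nat)"
    by simp
  finally have C: "Suc m * a_seq m = 2 * a_seq (Suc m) - 2 * fact m" using A by simp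
  have "(fact m :: nat) \<le> a_seq (Suc m)" using A by (simp add: sum.lessThan_Suc_shift)
  then show ?thesis using C by simp
qed

definition dd :: "nat \<Rightarrow> rat" where
  "dd k = (if k = 0 then 0 else (-1) ^ Suc k * fact (k - 1))"

lemma T_lemma: "(\<Sum>k\<le>n. dd k * of_nat (Stirling n k)) = (if n = 1 then 1 else 0)"
proof (cases n)
  case 0
  then show ?thesis by (simp add: dd_def)
next
  case (Suc m)
  have "(\<Sum>k\<le>Suc m. dd k * of_nat (Stirling (Suc m) k))
      = (\<Sum>k\<le>m. dd (Suc k) * of_nat (Stirling (Suc m) (Suc k)))"
    by (subst sum.atMost_Suc_shift) simp
  also have "\<dots> = (\<Sum>k\<le>m. dd (Suc k) * of_nat (Suc k) * of_nat (Stirling m (Suc k)))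
       + (\<Sum>k\<le>m. dd (Suc k) * of_nat (Stirling m k))"
    by (simp add: sum.distrib algebra_simps)
  also have "(\<Sum>k\<le>m. dd (Suc k) * of_nat (Suc k) * of_nat (Stirling m (Suc k)))
      = (\<Sum>k\<le>m. dd k * of_nat k * of_nat (Stirling m k))"
  proof -
    have "(\<Sum>k\<le>Suc m. dd k * of_nat k * of_nat (Stirling m k))
        = (\<Sum>k\<le>m. dd (Suc k) * of_nat (Suc k) * of_nat (Stirling m (Suc k)))"
      by (subst sum.atMost_Suc_shift) (simp del: of_nat_Suc)
    moreover have "(\<Sum>k\<le>Suc m. dd k * of_nat k * of_nat (Stirling m k))
        = (\<Sum>k\<le>m. dd k * of_nat k * of_nat (Stirling m k))"
      by simp
    ultimately show ?thesis by simp
  qed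
  also have "(\<Sum>k\<le>m. dd k * of_nat k * of_nat (Stirling m k)) + (\<Sum>k\<le>m. dd (Suc k) * of_nat (Stirling m k))
      = (\<Sum>k\<le>m. (if k = 0 then 1 else 0) * of_nat (Stirling m k))"
    unfolding sum.distrib[symmetric]
  proof (rule sum.cong)
    fix k assume "k \<in> {..m}"
    show "dd k * of_nat k * of_nat (Stirling m k) + dd (Suc k) * of_nat (Stirling m k)
        = (if k = 0 then 1 else 0) * of_nat (Stirling m k)"
    proof (cases k)
      case 0 then show ?thesis by (simp add: dd_def)
    next
      case (Suc j)
      have "dd k * of_nat k + dd (Suc k) = 0"
        using Suc by (simp add: dd_def algebra_simps)
      then have "(dd k * of_nat k + dd (Suc k)) * of_nat (Stirling m k) = 0" by simp
      then show ?thesis using Suc by (simp add: algebra_simps)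
    qed
  qed simp
  also have "\<dots> = (if m = 0 then 1 else 0)"
  proof -
    have "(\<Sum>k\<le>m. (if k = 0 then 1 else 0) * (of_nat (Stirling m k) :: rat))
        = (\<Sum>k\<le>m. (if k = 0 then of_nat (Stirling m k) else 0))"
      by (rule sum.cong) auto
    also have "\<dots> = of_nat (Stirling m 0)" by (simp add: sum.delta)
    finally show ?thesis by (cases m) simp_all
  qed
  finally show ?thesis using Suc by simp
qed

lemma binom_Stirling:
  "(\<Sum>j\<le>n. (n choose j) * Stirling j k) = Stirling (Suc n) (Suc k)"
proof (induction n arbitrary: k)
  case 0
  then show ?case by (cases k) simp_all
next
  case (Suc n)
  have "(\<Sum>j\<le>Suc n. (Suc n choose j) * Stirling j k)
      = (\<Sum>j\<le>Suc n. (n choose j) * Stirling j k) + (\<Sum>j\<le>n. (n choose j) * Stirling (Suc j) k)"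
    apply (subst (1 2) sum.atMost_Suc_shift)
    by (simp add: sum.distrib algebra_simps)
  also have "(\<Sum>j\<le>Suc n. (n choose j) * Stirling j k) = Stirling (Suc n) (Suc k)"
    using Suc.IH[of k] by simp
  also have "(\<Sum>j\<le>n. (n choose j) * Stirling (Suc j) k) = k * Stirling (Suc n) (Suc k) + Stirling (Suc n) k"
  proof (cases k)
    case 0
    then show ?thesis by simp
  next
    case (Suc k')
    have "(\<Sum>j\<le>n. (n choose j) * Stirling (Suc j) k)
       = k * (\<Sum>j\<le>n. (n choose j) * Stirling j k) + (\<Sum>j\<le>n. (n choose j) * Stirling j k')"
      using Suc by (simp add: sum.distrib sum_distrib_left algebra_simps)
    then show ?thesis using Suc Suc.IH by simp
  qed
  finally show ?case by simp
qed


definition bb :: "nat \<Rightarrow> rat" where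
  "bb k = (-1) ^ Suc k * of_nat (a_seq k)"

definition RR :: "nat \<Rightarrow> rat" where
  "RR n = (\<Sum>k\<le>n. bb k * of_nat (Stirling n k))"

lemma RR_ext: "j \<le> n \<Longrightarrow> RR j = (\<Sum>k\<le>n. bb k * of_nat (Stirling j k))"
  unfolding RR_def by (rule sum.mono_neutral_left) auto

lemma coef_lemma: "2 * bb k + (if k = 0 then 0 else bb (k - 1) * of_nat k) = 2 * dd k"
proof (cases k)
  case 0
  then show ?thesis by (simp add: bb_def dd_def a_seq_def)
next
  case (Suc m)
  have r: "2 * (of_nat (a_seq (Suc m)) :: rat) = of_nat (Suc m) * of_nat (a_seq m) + 2 * fact m"
    using arg_cong[OF a_rec[of m], of "of_nat :: nat \<Rightarrow> rat"] by (simp add: algebra_simps)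
  have "2 * bb k + bb (k - 1) * of_nat k = (-1)^m * (2 * of_nat (a_seq (Suc m)) - of_nat (Suc m) * of_nat (a_seq m))"
    using Suc by (simp add: bb_def algebra_simps)
  also have "\<dots> = (-1)^m * (2 * fact m)" using r by (simp add: algebra_simps)
  finally show ?thesis using Suc by (simp add: dd_def)
qed

lemma RR_rec: "RR n + (\<Sum>j\<le>n. of_nat (n choose j) * RR j) = 2 * (if n = 1 then 1 else 0)"
proof -
  have "(\<Sum>j\<le>n. of_nat (n choose j) * RR j)
      = (\<Sum>j\<le>n. of_nat (n choose j) * (\<Sum>k\<le>n. bb k * of_nat (Stirling j k)))"
    by (rule sum.cong) (auto simp: RR_ext)
  also have "\<dots> = (\<Sum>k\<le>n. bb k * (\<Sum>j\<le>n. of_nat (n choose j) * of_nat (Stirling j k)))"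
  proof -
    have "(\<Sum>j\<le>n. of_nat (n choose j) * (\<Sum>k\<le>n. bb k * of_nat (Stirling j k)))
       = (\<Sum>j\<le>n. \<Sum>k\<le>n. bb k * (of_nat (n choose j) * of_nat (Stirling j k)))"
      by (simp add: sum_distrib_left mult.left_commute)
    also have "\<dots> = (\<Sum>k\<le>n. \<Sum>j\<le>n. bb k * (of_nat (n choose j) * of_nat (Stirling j k)))"
      by (rule sum.swap)
    also have "\<dots> = (\<Sum>k\<le>n. bb k * (\<Sum>j\<le>n. of_nat (n choose j) * of_nat (Stirling j k)))"
      by (simp add: sum_distrib_left)
    finally show ?thesis .
  qed
  also have "\<dots> = (\<Sum>k\<le>n. bb k * of_nat (Stirling (Suc n) (Suc k)))"
  proof (rule sum.cong)
    fix k
    have "(\<Sum>j\<le>n. of_nat (n choose j) * (of_nat (Stirling j k) :: rat)) = of_nat (\<Sum>j\<le>n. (n choose j) * Stirling j k)"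
      by simp
    then show "bb k * (\<Sum>j\<le>n. of_nat (n choose j) * of_nat (Stirling j k)) = bb k * of_nat (Stirling (Suc n) (Suc k))"
      by (simp only: binom_Stirling)
  qed simp
  also have "\<dots> = (\<Sum>k\<le>n. bb k * of_nat (Suc k) * of_nat (Stirling n (Suc k))) + RR n"
    by (simp add: RR_def sum.distrib algebra_simps)
  also have "(\<Sum>k\<le>n. bb k * of_nat (Suc k) * of_nat (Stirling n (Suc k)))
      = (\<Sum>k\<le>n. (if k = 0 then 0 else bb (k - 1) * of_nat k) * of_nat (Stirling n k))"
  proof -
    have "(\<Sum>k\<le>Suc n. (if k = 0 then 0 else bb (k - 1) * of_nat k) * of_nat (Stirling n k))
        = (\<Sum>k\<le>n. bb k * of_nat (Suc k) * of_nat (Stirling n (Suc k)))"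
      by (subst sum.atMost_Suc_shift) (simp del: of_nat_Suc)
    moreover have "(\<Sum>k\<le>Suc n. (if k = 0 then 0 else bb (k - 1) * of_nat k) * of_nat (Stirling n k))
        = (\<Sum>k\<le>n. (if k = 0 then 0 else bb (k - 1) * of_nat k) * of_nat (Stirling n k))"
      by simp
    ultimately show ?thesis by simp
  qed
  finally have X: "(\<Sum>j\<le>n. of_nat (n choose j) * RR j) = (\<Sum>k\<le>n. (if k = 0 then 0 else bb (k - 1) * of_nat k) * of_nat (Stirling n k)) + RR n" .
  have Y: "(\<Sum>k\<le>n. (2 * bb k + (if k = 0 then 0 else bb (k - 1) * of_nat k)) * of_nat (Stirling n k))
     = 2 * RR n + (\<Sum>k\<le>n. (if k = 0 then 0 else bb (k - 1) * of_nat k) * of_nat (Stirling n k))"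
    unfolding RR_def by (simp add: sum.distrib sum_distrib_left algebra_simps)
  have "RR n + (\<Sum>j\<le>n. of_nat (n choose j) * RR j)
      = (\<Sum>k\<le>n. (2 * bb k + (if k = 0 then 0 else bb (k - 1) * of_nat k)) * of_nat (Stirling n k))"
    unfolding X Y by simp
  also have "\<dots> = 2 * (\<Sum>k\<le>n. dd k * of_nat (Stirling n k))"
  proof -
    have "(\<Sum>k\<le>n. (2 * bb k + (if k = 0 then 0 else bb (k - 1) * of_nat k)) * of_nat (Stirling n k))
        = (\<Sum>k\<le>n. 2 * (dd k * of_nat (Stirling n k)))"
      by (rule sum.cong) (simp_all add: coef_lemma)
    then show ?thesis by (simp add: sum_distrib_left)
  qed
  finally show ?thesis by (simp add: T_lemma)
qed

lemma gen_rec: "genocchi n + (\<Sum>j\<le>n. of_nat (n choose j) * genocchi j) = 2 * (if n = 1 then 1 else 0)"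
proof -
  define E :: "rat fps" where "E = fps_exp 1 + 1"
  define F :: "rat fps" where "F = 2 * fps_X / E"
  have E0: "E $ 0 \<noteq> 0" by (simp add: E_def)
  have "F * E = 2 * fps_X * (inverse E * E)"
    unfolding F_def using E0 by (simp add: fps_divide_unit mult.assoc)
  also have "inverse E * E = 1" using E0 by (rule inverse_mult_eq_1)
  finally have FE: "F * fps_exp 1 + F = 2 * fps_X" by (simp add: E_def algebra_simps)
  have "fact n * (F * fps_exp 1) $ n = (\<Sum>i=0..n. fact n * (F $ i / fact (n - i)))"
    by (simp add: fps_mult_nth sum_distrib_left)
  also have "\<dots> = (\<Sum>i=0..n. of_nat (n choose i) * (fact i * F $ i))"
  proof (rule sum.cong)
    fix i assume "i \<in> {0..n}"
    then have "i \<le> n" by simp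
    then show "fact n * (F $ i / fact (n - i)) = of_nat (n choose i) * (fact i * F $ i)"
      by (simp add: binomial_fact field_simps)
  qed simp
  finally have "fact n * (F * fps_exp 1) $ n = (\<Sum>j\<le>n. of_nat (n choose j) * genocchi j)"
    by (simp add: genocchi_def F_def E_def atLeast0AtMost)
  moreover have "fact n * (F * fps_exp 1) $ n + genocchi n = fact n * (2 * fps_X :: rat fps) $ n"
    unfolding FE[symmetric] by (simp add: genocchi_def F_def E_def algebra_simps)
  moreover have "fact n * (2 * fps_X :: rat fps) $ n = 2 * (if n = 1 then 1 else 0)"
    by (simp add: fps_mult_nth fps_numeral_nth sum.atLeast_Suc_atMost)
  ultimately show ?thesis by simp
qed

lemma uniq:
  fixes f g :: "nat \<Rightarrow> rat"
  assumes "\<And>n. f n + (\<Sum>j\<le>n. of_nat (n choose j) * f j) = c n"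
      and "\<And>n. g n + (\<Sum>j\<le>n. of_nat (n choose j) * g j) = c n"
  shows "f n = g n"
proof (induction n rule: less_induct)
  case (less n)
  have s: "(\<Sum>j<n. of_nat (n choose j) * f j) = (\<Sum>j<n. of_nat (n choose j) * g j)"
    using less by (intro sum.cong) auto
  have "2 * f n + (\<Sum>j<n. of_nat (n choose j) * f j) = c n"
    using assms(1)[of n] by (simp add: lessThan_Suc_atMost[symmetric])
  moreover have "2 * g n + (\<Sum>j<n. of_nat (n choose j) * g j) = c n"
    using assms(2)[of n] by (simp add: lessThan_Suc_atMost[symmetric])
  ultimately show ?case using s by simp
qed

theorem mainTheorem6:
  fixes n :: nat
  shows "genocchi n =
    (\<Sum>k=0..n. (-1::rat) powi (int k - 1) * of_nat (a_seq k) * of_nat (Stirling n k))"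
proof -
  have "genocchi n = RR n"
    by (rule uniq[OF gen_rec RR_rec])
  also have "\<dots> = (\<Sum>k=0..n. (-1::rat) powi (int k - 1) * of_nat (a_seq k) * of_nat (Stirling n k))"
    unfolding RR_def atLeast0AtMost
  proof (rule sum.cong)
    fix k
    show "bb k * of_nat (Stirling n k) = (-1::rat) powi (int k - 1) * of_nat (a_seq k) * of_nat (Stirling n k)"
    proof (cases k)
      case 0 then show ?thesis by (simp add: bb_def a_seq_def)
    next
      case (Suc m)
      have "int k - 1 = int m" using Suc by simp
      then have "(-1::rat) powi (int k - 1) = (-1) ^ m" by (simp add: power_int_of_nat)
      then show ?thesis using Suc by (simp add: bb_def)
    qed
  qed simp
  finally show ?thesis .
qed

end
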